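(* Let $X\in\mathbf{M}_{2N}(\mathbb{C})$ satisfy $X^{*}=X^{\sharp}$. Then there exist a unitary $U$ and a positive semidefinite $P$ in $\mathbf{M}_{2N}(\mathbb{C})$ with $U^{*}=U^{\sharp}$, $P^{*}=P^{\sharp}$ and $X=UP$.
   Context: For $X\in\mathbf{M}_{2N}(\mathbb{C})$ in $N\times N$ blocks $X=\begin{bmatrix}A&B\\C&D\end{bmatrix}$, the dual operation is $X^{\sharp}=\begin{bmatrix}D^{\mathrm T}&-B^{\mathrm T}\\-C^{\mathrm T}&A^{\mathrm T}\end{bmatrix}$. *)

theory Defs
  imports "HOL-Analysis.Analysis"
begin

text \<open>Matrices in M_{2N}(C) are represented as complex^('n+'n)^('n+'n): the index
  type 'n + 'n splits rows/columns into the first block (Inl) and the second block (Inr),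
  each of size N = CARD('n).\<close>

type_synonym 'n cmat2 = "complex ^ ('n + 'n) ^ ('n + 'n)"

definition cadjoint :: "complex ^ 'm ^ 'm \<Rightarrow> complex ^ 'm ^ 'm" where
  "cadjoint X = (\<chi> i j. cnj (X $ j $ i))"

text \<open>The dual: [A B; C D]^sharp = [D^T, -B^T; -C^T, A^T].\<close>
definition sharp :: "('n::finite) cmat2 \<Rightarrow> 'n cmat2" where
  "sharp X = (\<chi> i j. case (i, j) of
       (Inl a, Inl b) \<Rightarrow> X $ Inr b $ Inr a
     | (Inl a, Inr b) \<Rightarrow> - (X $ Inl b $ Inr a)
     | (Inr a, Inl b) \<Rightarrow> - (X $ Inr b $ Inl a)
     | (Inr a, Inr b) \<Rightarrow> X $ Inl b $ Inl a)"

definition unitary_mat :: "complex ^ 'm ^ 'm \<Rightarrow> bool" where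
  "unitary_mat U \<longleftrightarrow> cadjoint U ** U = mat 1 \<and> U ** cadjoint U = mat 1"

definition psd_mat :: "complex ^ 'm ^ 'm \<Rightarrow> bool" where
  "psd_mat P \<longleftrightarrow> cadjoint P = P \<and>
     (\<forall>x :: complex ^ 'm. 0 \<le> Re (\<Sum>i\<in>UNIV. cnj (x $ i) * (P *v x) $ i))"

end

theory Submission
  imports Defs
begin


definition fl :: "'n + 'n \<Rightarrow> 'n + 'n" where "fl = case_sum Inr Inl"
definition sg :: "'n + 'n \<Rightarrow> complex" where "sg = case_sum (\<lambda>_. 1) (\<lambda>_. -1)"

lemma fl_fl[simp]: "fl (fl i) = i" by (cases i) (auto simp: fl_def)
lemma sg_fl[simp]: "sg (fl i) = - sg i" by (cases i) (auto simp: fl_def sg_def)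
lemma sg_sq[simp]: "sg i * sg i = 1" by (cases i) (auto simp: sg_def)
lemma sg_cnj[simp]: "cnj (sg i) = sg i" by (cases i) (auto simp: sg_def)

lemma sum_fl: "(\<Sum>i\<in>UNIV. g (fl i)) = (\<Sum>i\<in>(UNIV::('n::finite + 'n) set). g i)"
  by (rule sum.reindex_bij_witness[where i=fl and j=fl]) auto

lemma sharp_nth: "sharp X $ i $ j = sg i * sg j * X $ fl j $ fl i"
  by (cases i; cases j) (simp_all add: sharp_def fl_def sg_def)

lemma sharp_mult: "sharp (A ** B) = sharp B ** sharp (A :: 'n::finite cmat2)"
proof -
  have "sharp (A ** B) $ i $ j = (sharp B ** sharp A) $ i $ j" for i j
  proof -
    have "(sharp B ** sharp A) $ i $ j = (\<Sum>k\<in>UNIV. sg i * sg j * (B $ fl k $ fl i * A $ fl j $ fl k))"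
      unfolding matrix_matrix_mult_def sharp_nth
      by (auto intro!: sum.cong simp: algebra_simps)
    also have "\<dots> = (\<Sum>k\<in>UNIV. sg i * sg j * (B $ k $ fl i * A $ fl j $ k))"
      by (rule sum_fl[where g = "\<lambda>k. sg i * sg j * (B $ k $ fl i * A $ fl j $ k)", simplified])
    also have "\<dots> = sharp (A ** B) $ i $ j"
      unfolding matrix_matrix_mult_def sharp_nth
      by (simp add: sum_distrib_left algebra_simps)
    finally show ?thesis by simp
  qed
  then show ?thesis by (simp add: vec_eq_iff)
qed

lemma sharp_sharp[simp]: "sharp (sharp A) = (A :: 'n::finite cmat2)"
  by (simp add: vec_eq_iff sharp_nth algebra_simps)

lemma sharp_mat1[simp]: "sharp (mat 1) = (mat 1 :: 'n::finite cmat2)"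
  by (auto simp: vec_eq_iff sharp_nth mat_def)
    (metis fl_fl)

lemma cadjoint_mult: "cadjoint (A ** B) = cadjoint B ** cadjoint (A :: complex^'m^'m)"
  by (simp add: vec_eq_iff cadjoint_def matrix_matrix_mult_def mult.commute)

lemma cadjoint_cadjoint[simp]: "cadjoint (cadjoint A) = A"
  by (simp add: vec_eq_iff cadjoint_def)

lemma cadjoint_mat1[simp]: "cadjoint (mat 1) = mat 1"
  by (simp add: vec_eq_iff cadjoint_def mat_def)

lemma cadjoint_add: "cadjoint (A + B) = cadjoint A + cadjoint B"
  by (simp add: vec_eq_iff cadjoint_def)

lemma sharp_add: "sharp (A + B) = sharp A + sharp (B :: 'n::finite cmat2)"
  by (simp add: vec_eq_iff sharp_nth algebra_simps)

definition smat :: "complex \<Rightarrow> complex^'m^'m \<Rightarrow> complex^'m^'m" where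
  "smat c A = (\<chi> i j. c * A $ i $ j)"

lemma smat_mult_left: "smat c A ** B = smat c (A ** B)"
  by (simp add: vec_eq_iff smat_def matrix_matrix_mult_def sum_distrib_left mult.assoc)
lemma smat_mult_right: "A ** smat c B = smat c (A ** B)"
  by (simp add: vec_eq_iff smat_def matrix_matrix_mult_def sum_distrib_left mult.left_commute)
lemma smat_smat: "smat a (smat b A) = smat (a * b) A"
  by (simp add: vec_eq_iff smat_def)
lemma smat_0[simp]: "smat 0 A = 0"
  by (simp add: vec_eq_iff smat_def)
lemma cadjoint_smat: "cadjoint (smat c A) = smat (cnj c) (cadjoint A)"
  by (simp add: vec_eq_iff smat_def cadjoint_def)
lemma sharp_smat: "sharp (smat c A) = smat c (sharp (A :: 'n::finite cmat2))"
  by (simp add: vec_eq_iff smat_def sharp_nth)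

definition outer :: "complex^'m \<Rightarrow> complex^'m \<Rightarrow> complex^'m^'m" where
  "outer v u = (\<chi> i j. v $ i * cnj (u $ j))"
definition ip :: "complex^'m \<Rightarrow> complex^'m \<Rightarrow> complex" where
  "ip u x = (\<Sum>k\<in>UNIV. cnj (u $ k) * x $ k)"

lemma outer_mult: "outer v u ** outer x y = smat (ip u x) (outer v y)"
  by (simp add: vec_eq_iff smat_def outer_def ip_def matrix_matrix_mult_def
      sum_distrib_left sum_distrib_right mult_ac)

lemma cadjoint_outer: "cadjoint (outer v u) = outer u v"
  by (simp add: vec_eq_iff cadjoint_def outer_def)

definition wv :: "complex^('n::finite + 'n) \<Rightarrow> complex^('n + 'n)" where
  "wv v = (\<chi> i. sg i * cnj (v $ fl i))"

lemma sharp_outer: "sharp (outer v v) = outer (wv v) (wv (v :: complex^('n::finite+'n)))"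
  by (simp add: vec_eq_iff outer_def wv_def sharp_nth mult_ac)

lemma ip_v_wv: "ip v (wv (v :: complex^('n::finite+'n))) = 0"
proof -
  have "ip v (wv v) = (\<Sum>k\<in>UNIV. cnj (v $ fl k) * (sg (fl k) * cnj (v $ fl (fl k))))"
    unfolding ip_def wv_def using sum_fl[symmetric, where g = "\<lambda>k. cnj (v $ k) * (sg k * cnj (v $ fl k))"] by simp
  also have "\<dots> = - ip v (wv v)"
    unfolding ip_def wv_def by (simp add: sum_negf[symmetric] mult_ac)
  finally show ?thesis by simp
qed

lemma ip_wv_v: "ip (wv v) (v :: complex^('n::finite+'n)) = 0"
proof -
  have "ip (wv v) v = cnj (ip v (wv v))"
    by (simp add: ip_def mult.commute)
  then show ?thesis by (simp add: ip_v_wv)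
qed

lemma ip_wv_wv: "ip (wv v) (wv v) = ip v (v :: complex^('n::finite+'n))"
proof -
  have "ip (wv v) (wv v) = (\<Sum>k\<in>UNIV. v $ fl k * cnj (v $ fl k))"
    unfolding ip_def wv_def by (simp add: mult_ac)
      (metis (no_types, lifting) mult.assoc mult.commute mult_1 sg_sq)
  also have "\<dots> = (\<Sum>k\<in>UNIV. v $ k * cnj (v $ k))"
    by (rule sum_fl[where g = "\<lambda>k. v $ k * cnj (v $ k)"])
  finally show ?thesis by (simp add: ip_def mult.commute)
qed



lemma matrix_add_rdistrib': "((B + C) ** A) = (B ** A) + (C ** (A::complex^'m^'m))"
  by (simp add: vec_eq_iff matrix_matrix_mult_def sum.distrib[symmetric] distrib_right)

definition tr :: "complex^'m^'m \<Rightarrow> complex" where "tr A = (\<Sum>i\<in>UNIV. A $ i $ i)"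
definition qf :: "complex^'m^'m \<Rightarrow> complex^'m \<Rightarrow> complex" where
  "qf M v = (\<Sum>i\<in>UNIV. cnj (v $ i) * (M *v v) $ i)"

lemma tr_add: "tr (A + B) = tr A + tr B" by (simp add: tr_def sum.distrib)
lemma tr_smat: "tr (smat c A) = c * tr A" by (simp add: tr_def smat_def sum_distrib_left)
lemma tr_outer: "tr (outer v v ** M) = qf M v"
proof -
  have "tr (outer v v ** M) = (\<Sum>i\<in>UNIV. \<Sum>k\<in>UNIV. v $ i * cnj (v $ k) * M $ k $ i)"
    by (simp add: tr_def outer_def matrix_matrix_mult_def)
  also have "\<dots> = (\<Sum>k\<in>UNIV. \<Sum>i\<in>UNIV. v $ i * cnj (v $ k) * M $ k $ i)"
    by (rule sum.swap)
  also have "\<dots> = qf M v"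
    by (simp add: qf_def matrix_vector_mult_def sum_distrib_left mult_ac)
  finally show ?thesis .
qed

lemma qf_wv:
  assumes "cadjoint M = sharp (M :: 'n::finite cmat2)"
  shows "qf M (wv v) = cnj (qf M v)"
proof -
  have e: "sg i * sg j * M $ i $ j = cnj (M $ fl i $ fl j)" for i j
  proof -
    have "cadjoint M $ fl j $ fl i = sharp M $ fl j $ fl i" using assms by simp
    then show ?thesis by (simp add: cadjoint_def sharp_nth mult_ac)
  qed
  have "qf M (wv v) = (\<Sum>i\<in>UNIV. \<Sum>j\<in>UNIV. v $ fl i * cnj (v $ fl j) * (sg i * sg j * M $ i $ j))"
    by (simp add: qf_def wv_def matrix_vector_mult_def sum_distrib_left mult_ac)
  also have "\<dots> = (\<Sum>i\<in>UNIV. \<Sum>j\<in>UNIV. v $ fl i * cnj (v $ fl j) * cnj (M $ fl i $ fl j))"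
    by (simp add: e)
  also have "\<dots> = (\<Sum>i\<in>UNIV. \<Sum>j\<in>UNIV. v $ i * cnj (v $ fl j) * cnj (M $ i $ fl j))"
    by (rule sum_fl[where g = "\<lambda>i. \<Sum>j\<in>UNIV. v $ i * cnj (v $ fl j) * cnj (M $ i $ fl j)"])
  also have "\<dots> = (\<Sum>i\<in>UNIV. \<Sum>j\<in>UNIV. v $ i * cnj (v $ j) * cnj (M $ i $ j))"
    by (rule sum.cong[OF refl], rule sum_fl[where g = "\<lambda>j. v $ i * cnj (v $ j) * cnj (M $ i $ j)" for i])
  also have "\<dots> = cnj (qf M v)"
    by (simp add: qf_def matrix_vector_mult_def sum_distrib_left mult_ac)
  finally show ?thesis .
qed

definition Wm :: "complex \<Rightarrow> complex^('n::finite+'n) \<Rightarrow> 'n cmat2" where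
  "Wm z v = mat 1 + smat (z - 1) (outer v v) + smat (cnj z - 1) (outer (wv v) (wv v))"

lemma cadjoint_Wm: "cadjoint (Wm z v) = mat 1 + smat (cnj z - 1) (outer v v) + smat (z - 1) (outer (wv v) (wv v))"
  by (simp add: Wm_def cadjoint_add cadjoint_smat cadjoint_outer)

lemma Wm_struct: "cadjoint (Wm z v) = sharp (Wm z v)"
proof -
  have "sharp (outer (wv v) (wv v)) = outer v v"
    by (metis sharp_outer sharp_sharp)
  then show ?thesis
    unfolding cadjoint_Wm by (simp add: Wm_def sharp_add sharp_smat sharp_outer add_ac)
qed

lemma Wm_unitary:
  assumes v: "ip v v = 1" and z: "cnj z * z = 1"
  shows "unitary_mat (Wm z v)"
proof -
  have w: "ip (wv v) (wv v) = 1" using v by (simp add: ip_wv_wv)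
  have e: "(cnj z - 1) + (z - 1) + (cnj z - 1) * (z - 1) = 0" using z by (simp add: algebra_simps)
  have zz: "z * (cnj z * x) = x" for x using z by (metis mult.assoc mult.commute mult_1)
  have e2: "(cnj z - 1) + (z - 1) + (z - 1) * (cnj z - 1) = 0" using z by (simp add: algebra_simps)
  show ?thesis
    unfolding unitary_mat_def cadjoint_Wm
    unfolding Wm_def
    apply (simp add: matrix_add_ldistrib matrix_add_rdistrib' smat_mult_left smat_mult_right
        outer_mult smat_smat v w ip_v_wv ip_wv_v)
    apply (simp add: vec_eq_iff smat_def)
    apply (intro conjI allI)
    using e e2 by (simp_all add: algebra_simps) (simp_all add: zz)
qed



lemma unitary_mult: "unitary_mat A \<Longrightarrow> unitary_mat B \<Longrightarrow> unitary_mat (A ** (B::complex^'m^'m))"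
  unfolding unitary_mat_def cadjoint_mult
  by (metis matrix_mul_assoc matrix_mul_lid)

lemma struct_mult: "cadjoint A = sharp A \<Longrightarrow> cadjoint B = sharp B \<Longrightarrow>
   cadjoint (A ** B) = sharp (A ** (B :: 'n::finite cmat2))"
  by (simp add: cadjoint_mult sharp_mult)

lemma sharp_eq: "sharp X = (\<chi> i j. sg i * sg j * X $ fl j $ fl i)"
  by (simp add: vec_eq_iff sharp_nth)

lemma entry_bound:
  assumes "cadjoint U ** U = mat 1"
  shows "norm (U $ k $ j) \<le> 1"
proof -
  have "(cadjoint U ** U) $ j $ j = 1" using assms by (simp add: mat_def)
  then have "(\<Sum>i\<in>UNIV. cnj (U $ i $ j) * U $ i $ j) = 1"
    by (simp add: cadjoint_def matrix_matrix_mult_def)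
  then have "(\<Sum>i\<in>UNIV. complex_of_real ((norm (U $ i $ j))\<^sup>2)) = 1"
    by (simp only: complex_norm_square mult.commute)
  then have "(\<Sum>i\<in>UNIV. (norm (U $ i $ j))\<^sup>2) = 1"
    by (metis of_real_eq_1_iff of_real_sum)
  moreover have "(norm (U $ k $ j))\<^sup>2 \<le> (\<Sum>i\<in>UNIV. (norm (U $ i $ j))\<^sup>2)"
    by (rule member_le_sum) auto
  ultimately show ?thesis by (simp add: power_le_one_iff abs_square_le_1)
qed

lemma norm_le_sum_vec: "norm (x :: 'a::real_normed_vector ^ 'm) \<le> (\<Sum>i\<in>UNIV. norm (x $ i))"
  unfolding norm_vec_def by (rule L2_set_le_sum) auto

lemma compact_S: "compact {U :: 'n::finite cmat2. unitary_mat U \<and> cadjoint U = sharp U}"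
proof -
  let ?S = "{U :: 'n::finite cmat2. unitary_mat U \<and> cadjoint U = sharp U}"
  have "bounded ?S"
    unfolding bounded_iff
  proof (intro exI ballI)
    fix U assume "U \<in> ?S"
    then have u: "cadjoint U ** U = mat 1" unfolding unitary_mat_def by blast
    have "norm U \<le> (\<Sum>i\<in>UNIV. norm (U $ i))" by (rule norm_le_sum_vec)
    also have "\<dots> \<le> (\<Sum>i\<in>UNIV. \<Sum>j\<in>UNIV. norm (U $ i $ j))"
      by (rule sum_mono, rule norm_le_sum_vec)
    also have "\<dots> \<le> (\<Sum>i\<in>(UNIV::('n+'n) set). \<Sum>j\<in>(UNIV::('n+'n) set). 1)"
      by (intro sum_mono entry_bound[OF u])
    finally show "norm U \<le> (\<Sum>i\<in>(UNIV::('n+'n) set). \<Sum>j\<in>(UNIV::('n+'n) set). (1::real))" .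
  qed
  moreover have "closed ?S"
  proof -
    have c1: "continuous_on UNIV (\<lambda>U::'n cmat2. cadjoint U ** U)"
      unfolding cadjoint_def matrix_matrix_mult_def by (intro continuous_intros)
    have c2: "continuous_on UNIV (\<lambda>U::'n cmat2. U ** cadjoint U)"
      unfolding cadjoint_def matrix_matrix_mult_def by (intro continuous_intros)
    have c3: "continuous_on UNIV (\<lambda>U::'n cmat2. cadjoint U)"
      unfolding cadjoint_def by (intro continuous_intros)
    have c4: "continuous_on UNIV (\<lambda>U::'n cmat2. sharp U)"
      unfolding sharp_eq by (intro continuous_intros)
    have "?S = {U. cadjoint U ** U = mat 1} \<inter> {U. U ** cadjoint U = mat 1} \<inter> {U. cadjoint U = sharp U}"
      by (auto simp: unitary_mat_def)
    moreover have "closed {U::'n cmat2. cadjoint U ** U = mat 1}"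
      by (rule closed_Collect_eq[OF c1 continuous_on_const])
    moreover have "closed {U::'n cmat2. U ** cadjoint U = mat 1}"
      by (rule closed_Collect_eq[OF c2 continuous_on_const])
    moreover have "closed {U::'n cmat2. cadjoint U = sharp U}"
      by (rule closed_Collect_eq[OF c3 c4])
    ultimately show ?thesis by (simp add: closed_Int)
  qed
  ultimately show ?thesis by (simp add: compact_eq_bounded_closed)
qed



definition bf :: "complex^'m^'m \<Rightarrow> complex^'m \<Rightarrow> complex^'m \<Rightarrow> complex" where
  "bf M x y = (\<Sum>i\<in>UNIV. cnj (x $ i) * (M *v y) $ i)"

lemma mv_smult: "M *v (c *s y) = c *s (M *v (y :: complex^'m))"
  by (simp add: vec_eq_iff matrix_vector_mult_def sum_distrib_left mult_ac)

lemma qf_add: "qf M (x + y) = qf M x + qf M y + bf M x y + bf M y x"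
  by (simp add: qf_def bf_def matrix_vector_right_distrib sum.distrib algebra_simps)

lemma qf_smult: "qf M (c *s y) = cnj c * c * qf M y"
  by (simp add: qf_def mv_smult sum_distrib_left mult_ac)
lemma bf_smult_r: "bf M x (c *s y) = c * bf M x y"
  by (simp add: bf_def mv_smult sum_distrib_left mult_ac)
lemma bf_smult_l: "bf M (c *s x) y = cnj c * bf M x y"
  by (simp add: bf_def sum_distrib_left mult_ac)

lemma bf_axis: "bf M (axis k 1) (axis l 1) = M $ k $ l"
proof -
  have r: "(M *v axis l 1) $ i = M $ i $ l" for i
  proof -
    have "(M *v axis l 1) $ i = (\<Sum>j\<in>UNIV. if j = l then M$i$j else 0)"
      unfolding matrix_vector_mult_def axis_def by (simp add: if_distrib cong: if_cong)
    then show ?thesis by simp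
  qed
  have "bf M (axis k 1) (axis l 1) = (\<Sum>i\<in>UNIV. if i = k then M $ i $ l else 0)"
    unfolding bf_def r by (rule sum.cong) (auto simp: axis_def)
  then show ?thesis by simp
qed

lemma herm_of_real_qf:
  assumes "\<And>x. Im (qf M x) = 0"
  shows "cadjoint M = M"
proof -
  have key: "bf M x y = cnj (bf M y x)" for x y
  proof -
    have 1: "Im (bf M x y + bf M y x) = 0"
      using assms[of "x + y"] assms[of x] assms[of y] by (simp add: qf_add)
    have "Im (qf M (x + \<i> *s y)) = 0" by (rule assms)
    then have 2: "Re (bf M x y) - Re (bf M y x) = 0"
      using assms[of x] assms[of y] by (simp add: qf_add qf_smult bf_smult_r bf_smult_l)
    show ?thesis using 1 2 by (simp add: complex_eq_iff)
  qed
  show ?thesis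
    by (simp add: vec_eq_iff cadjoint_def) (metis bf_axis key)
qed

lemma ip_self: "ip v v = complex_of_real (\<Sum>k\<in>UNIV. (norm (v $ k))\<^sup>2)"
  by (simp only: ip_def of_real_sum complex_norm_square mult.commute)

theorem mainTheorem4:
  fixes X :: "('n::finite) cmat2"
  assumes "cadjoint X = sharp X"
  shows "\<exists>U P :: 'n cmat2. unitary_mat U \<and> psd_mat P \<and>
           cadjoint U = sharp U \<and> cadjoint P = sharp P \<and> X = U ** P"
proof -
  let ?S = "{U :: 'n::finite cmat2. unitary_mat U \<and> cadjoint U = sharp U}"
  let ?F = "\<lambda>U :: 'n cmat2. Re (tr (cadjoint U ** X))"
  have ne: "?S \<noteq> {}"
  proof -
    have "mat 1 \<in> ?S" by (simp add: unitary_mat_def)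
    then show ?thesis by blast
  qed
  have cF: "continuous_on ?S ?F"
    unfolding tr_def cadjoint_def matrix_matrix_mult_def by (intro continuous_intros)
  obtain U0 where U0: "U0 \<in> ?S" and max: "\<And>U. U \<in> ?S \<Longrightarrow> ?F U \<le> ?F U0"
    using continuous_attains_sup[OF compact_S ne cF] by blast
  define M where "M = cadjoint U0 ** X"
  have U0u: "unitary_mat U0" and U0s: "cadjoint U0 = sharp U0" using U0 by auto
  have Ms: "cadjoint M = sharp M"
  proof -
    have "sharp (cadjoint U0) = U0" using U0s by simp
    then show ?thesis
      unfolding M_def by (simp add: cadjoint_mult sharp_mult assms)
  qed
  have XUM: "X = U0 ** M"
    using U0u unfolding M_def unitary_mat_def by (simp add: matrix_mul_assoc)
  have unit: "Im (qf M v) = 0 \<and> 0 \<le> Re (qf M v)" if v: "ip v v = 1" for v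
  proof -
    define a where "a = qf M v"
    have ineq: "Re (cnj z * a) \<le> Re a" if z: "cnj z * z = 1" for z
    proof -
      have "U0 ** Wm z v \<in> ?S"
        using unitary_mult[OF U0u Wm_unitary[OF v z]] struct_mult[OF U0s Wm_struct]
        by simp
      then have "?F (U0 ** Wm z v) \<le> ?F U0" by (rule max)
      moreover have "cadjoint (U0 ** Wm z v) ** X = cadjoint (Wm z v) ** M"
        unfolding M_def cadjoint_mult by (simp add: matrix_mul_assoc)
      moreover have "tr (cadjoint (Wm z v) ** M) = tr M + (cnj z - 1) * a + (z - 1) * cnj a"
        unfolding cadjoint_Wm a_def
        by (simp add: matrix_add_rdistrib' smat_mult_left tr_add tr_smat tr_outer qf_wv[OF Ms])
      ultimately have "Re ((cnj z - 1) * a + (z - 1) * cnj a) \<le> 0"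
        unfolding M_def by simp
      then show ?thesis by (simp add: ring_distribs mult.commute[of "Re z"] mult.commute[of "Im z"])
    qed
    show ?thesis
    proof (cases "a = 0")
      case True then show ?thesis by (simp add: a_def[symmetric])
    next
      case False
      define z where "z = a / complex_of_real (cmod a)"
      have nz: "cmod a \<noteq> 0" using False by simp
      have "cnj z * z = 1"
        using nz unfolding z_def by (simp add: complex_norm_square[symmetric] power2_eq_square mult_ac)
      from ineq[OF this] have "Re (cnj z * a) \<le> Re a" .
      moreover have "cnj z * a = complex_of_real (cmod a)"
        using nz unfolding z_def
        by (simp add: complex_norm_square[symmetric] power2_eq_square field_simps mult_ac)
      ultimately have le: "cmod a \<le> Re a" by simp
      have "(cmod a)\<^sup>2 = (Re a)\<^sup>2 + (Im a)\<^sup>2" by (simp add: cmod_power2)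
      moreover have "(cmod a)\<^sup>2 \<le> (Re a)\<^sup>2" using le by (simp add: power_mono)
      ultimately have "Im a = 0" by simp
      then show ?thesis using le norm_ge_zero[of a] unfolding a_def by linarith
    qed
  qed
  have all: "Im (qf M v) = 0 \<and> 0 \<le> Re (qf M v)" for v
  proof (cases "v = 0")
    case True then show ?thesis by (simp add: qf_def)
  next
    case False
    then obtain k where k: "v $ k \<noteq> 0" by (auto simp: vec_eq_iff)
    define s where "s = (\<Sum>k\<in>UNIV. (norm (v $ k))\<^sup>2)"
    have "(norm (v $ k))\<^sup>2 \<le> s" unfolding s_def by (rule member_le_sum) auto
    then have spos: "s > 0" using k by (smt (verit) zero_less_power2 zero_less_norm_iff)
    define n where "n = complex_of_real (sqrt s)"
    have n0: "n \<noteq> 0" using spos by (simp add: n_def)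
    have cn: "cnj n * n = complex_of_real s"
    proof -
      have ss: "sqrt s * sqrt s = s" using spos by simp
      have "cnj n * n = complex_of_real (sqrt s * sqrt s)"
        by (simp only: n_def complex_cnj_complex_of_real of_real_mult)
      then show ?thesis by (simp only: ss)
    qed
    define u where "u = (inverse n) *s v"
    have ipv: "ip v v = complex_of_real s" by (simp add: ip_self s_def)
    have "ip u u = cnj (inverse n) * inverse n * ip v v"
      by (simp add: u_def ip_def sum_distrib_left mult_ac)
    also have "\<dots> = inverse (cnj n * n) * complex_of_real s"
      by (simp add: ipv complex_cnj_inverse)
    also have "\<dots> = 1" using cn spos by simp
    finally have "ip u u = 1" .
    from unit[OF this] have "Im (qf M u) = 0 \<and> 0 \<le> Re (qf M u)" .
    moreover have "qf M u = qf M v / complex_of_real s"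
      unfolding u_def qf_smult using cn n0 spos
      by (simp add: field_simps flip: complex_cnj_inverse)
    ultimately show ?thesis using spos
      by (simp add: Im_divide_of_real Re_divide_of_real zero_le_divide_iff)
  qed
  have herm: "cadjoint M = M" using all herm_of_real_qf by blast
  have "psd_mat M"
    unfolding psd_mat_def using herm all by (simp add: qf_def)
  then show ?thesis using U0u U0s Ms XUM by blast
qed


end
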